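(* For every integer $n\ge 2$, every independent set of the hypergraph $\mathtt{H}^{n}_{1}(\{0,1,2\})$ has size at most $\frac{2}{3}\cdot 3^n$.
   Context: $\mathtt{H}^{n}_{1}(\{0,1,2\})$ is the $3$-uniform hypergraph with vertex set $\{0,1,2\}^n$ in which three distinct vertices $\mathbf{x}^1,\mathbf{x}^2,\mathbf{x}^3$ form a hyperedge iff $\sum_{i=1}^n \big|\{0,1,2\}\setminus\{\mathbf{x}^1_i,\mathbf{x}^2_i,\mathbf{x}^3_i\}\big| \le 1$. An independent set is a set of vertices containing no hyperedge. *)

theory Defs
  imports Complex_Main
begin

text \<open>Vertices of H^n_1({0,1,2}): words in {0,1,2}^n, represented as functions
  nat => nat with values in {0,1,2} on {0..<n} and value 0 outside.\<close>
definition cube3 :: "nat \<Rightarrow> (nat \<Rightarrow> nat) set" where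
  "cube3 n = {x. (\<forall>i<n. x i \<in> {0,1,2}) \<and> (\<forall>i\<ge>n. x i = 0)}"

definition hedge3 :: "nat \<Rightarrow> (nat \<Rightarrow> nat) \<Rightarrow> (nat \<Rightarrow> nat) \<Rightarrow> (nat \<Rightarrow> nat) \<Rightarrow> bool" where
  "hedge3 n x y z \<longleftrightarrow> x \<in> cube3 n \<and> y \<in> cube3 n \<and> z \<in> cube3 n \<and>
     x \<noteq> y \<and> y \<noteq> z \<and> x \<noteq> z \<and>
     (\<Sum>i<n. card ({0,1,2::nat} - {x i, y i, z i})) \<le> 1"

definition indep3 :: "nat \<Rightarrow> (nat \<Rightarrow> nat) set \<Rightarrow> bool" where
  "indep3 n A \<longleftrightarrow> A \<subseteq> cube3 n \<and>
     (\<forall>x\<in>A. \<forall>y\<in>A. \<forall>z\<in>A. \<not> hedge3 n x y z)"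

end

theory Submission
  imports Defs "HOL-Library.FuncSet"
begin

definition sh :: "nat \<Rightarrow> (nat \<Rightarrow> nat) \<Rightarrow> (nat \<Rightarrow> nat)" where
  "sh n x = (\<lambda>i. if i < n then Suc (x i) mod 3 else 0)"

lemma sh_cube: "x \<in> cube3 n \<Longrightarrow> sh n x \<in> cube3 n"
  unfolding cube3_def sh_def by auto

lemma sh3: assumes "x \<in> cube3 n" shows "sh n (sh n (sh n x)) = x"
proof
  fix i show "sh n (sh n (sh n x)) i = x i"
    using assms unfolding cube3_def sh_def by (cases "i < n") auto
qed

lemma card_cube: "card (cube3 n) = 3 ^ n"
proof -
  have "bij_betw (\<lambda>f i. if i < n then f i else 0) (PiE {..<n} (\<lambda>_. {0,1,2::nat})) (cube3 n)"
  proof (rule bij_betw_byWitness[where f'="\<lambda>x. restrict x {..<n}"])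
    show "\<forall>a\<in>PiE {..<n} (\<lambda>_. {0,1,2::nat}). restrict (\<lambda>i. if i < n then a i else 0) {..<n} = a"
      by (auto simp: PiE_def extensional_def restrict_def fun_eq_iff)
    show "\<forall>a'\<in>cube3 n. (\<lambda>i. if i < n then restrict a' {..<n} i else 0) = a'"
      by (auto simp: cube3_def fun_eq_iff)
    show "(\<lambda>f i. if i < n then f i else 0) ` PiE {..<n} (\<lambda>_. {0,1,2::nat}) \<subseteq> cube3 n"
      by (auto simp: cube3_def PiE_def Pi_def)
    show "(\<lambda>x. restrict x {..<n}) ` cube3 n \<subseteq> PiE {..<n} (\<lambda>_. {0,1,2::nat})"
      by (auto simp: cube3_def PiE_def Pi_def)
  qed
  then have "card (cube3 n) = card (PiE {..<n} (\<lambda>_. {0,1,2::nat}))"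
    by (simp add: bij_betw_same_card)
  also have "\<dots> = 3 ^ n" by (simp add: card_PiE numeral_3_eq_3)
  finally show ?thesis .
qed

lemma hedge_sh:
  assumes "x \<in> cube3 n" "n \<ge> 1"
  shows "hedge3 n x (sh n x) (sh n (sh n x))"
proof -
  have x0: "x 0 \<in> {0,1,2}" using assms unfolding cube3_def by auto
  have d0: "sh n x 0 = Suc (x 0) mod 3" "sh n (sh n x) 0 = Suc (Suc (x 0) mod 3) mod 3"
    using assms(2) by (auto simp: sh_def)
  have "x \<noteq> sh n x"
  proof
    assume e: "x = sh n x"
    have "(x) 0 \<noteq> (sh n x) 0" using x0 d0 by auto
    then show False using e by simp
  qed
  moreover have "sh n x \<noteq> sh n (sh n x)"
  proof
    assume e: "sh n x = sh n (sh n x)"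
    have "(sh n x) 0 \<noteq> (sh n (sh n x)) 0" using x0 d0 by auto
    then show False using e by simp
  qed
  moreover have "x \<noteq> sh n (sh n x)"
  proof
    assume e: "x = sh n (sh n x)"
    have "(x) 0 \<noteq> (sh n (sh n x)) 0" using x0 d0 by auto
    then show False using e by simp
  qed
  moreover have "\<forall>i<n. card ({0,1,2::nat} - {x i, sh n x i, sh n (sh n x) i}) = 0"
  proof (intro allI impI)
    fix i assume i: "i < n"
    then have "x i \<in> {0,1,2}" using assms unfolding cube3_def by auto
    moreover have "sh n x i = Suc (x i) mod 3" "sh n (sh n x) i = Suc (Suc (x i) mod 3) mod 3"
      using i by (auto simp: sh_def)
    ultimately have "{x i, sh n x i, sh n (sh n x) i} = {0,1,2::nat}" by auto
    then show "card ({0,1,2::nat} - {x i, sh n x i, sh n (sh n x) i}) = 0" by simp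
  qed
  ultimately show ?thesis using assms sh_cube unfolding hedge3_def by auto
qed

theorem fact3p3:
  fixes n :: nat and A :: "(nat \<Rightarrow> nat) set"
  assumes "n \<ge> 2" and "indep3 n A"
  shows "real (card A) \<le> 2 / 3 * 3 ^ n"
proof -
  define C where "C = cube3 n"
  define s where "s = sh n"
  have AC: "A \<subseteq> C" using assms(2) unfolding indep3_def C_def by auto
  have finC: "finite C"
  proof (rule card_ge_0_finite)
    show "card C > 0" using card_cube[of n] unfolding C_def by simp
  qed
  have sC: "\<And>x. x \<in> C \<Longrightarrow> s x \<in> C" unfolding s_def C_def by (rule sh_cube)
  have s3: "\<And>x. x \<in> C \<Longrightarrow> s (s (s x)) = x" unfolding s_def C_def by (rule sh3)
  have inj: "inj_on s C"
  proof (rule inj_onI)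
    fix x y assume "x \<in> C" "y \<in> C" "s x = s y"
    then show "x = y" using s3 by metis
  qed
  have img: "s ` C = C"
  proof
    show "s ` C \<subseteq> C" using sC by auto
    show "C \<subseteq> s ` C"
    proof
      fix x assume "x \<in> C"
      then have "x = s (s (s x))" "s (s x) \<in> C" using s3 sC by auto
      then show "x \<in> s ` C" by blast
    qed
  qed
  have cnt: "(\<Sum>x\<in>C. (if x \<in> A then 1 else 0::nat)) = card A"
    using AC finC by (simp add: sum.If_cases Int_absorb1)
  have r1: "(\<Sum>x\<in>C. (if s x \<in> A then 1 else 0::nat)) = card A"
  proof -
    have "(\<Sum>x\<in>C. (if s x \<in> A then 1 else 0::nat)) = (\<Sum>y\<in>s ` C. (if y \<in> A then 1 else 0::nat))"
      using sum.reindex[OF inj, of "\<lambda>y. if y \<in> A then 1 else 0::nat"] by simp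
    then show ?thesis using img cnt by simp
  qed
  have inj2: "inj_on (s \<circ> s) C" using inj sC by (auto intro!: comp_inj_on simp: inj_on_def)
  have img2: "(s \<circ> s) ` C = C" using img by (metis image_comp)
  have r2: "(\<Sum>x\<in>C. (if s (s x) \<in> A then 1 else 0::nat)) = card A"
  proof -
    have "(\<Sum>x\<in>C. (if s (s x) \<in> A then 1 else 0::nat)) = (\<Sum>y\<in>(s \<circ> s) ` C. (if y \<in> A then 1 else 0::nat))"
      using sum.reindex[OF inj2, of "\<lambda>y. if y \<in> A then 1 else 0::nat"] by simp
    then show ?thesis using img2 cnt by simp
  qed
  have le2: "\<And>x. x \<in> C \<Longrightarrow> (if x \<in> A then 1 else 0::nat) + (if s x \<in> A then 1 else 0) + (if s (s x) \<in> A then 1 else 0) \<le> 2"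
  proof -
    fix x assume "x \<in> C"
    then have "hedge3 n x (s x) (s (s x))" using hedge_sh[of x n] assms(1) unfolding C_def s_def by auto
    then have "\<not> (x \<in> A \<and> s x \<in> A \<and> s (s x) \<in> A)" using assms(2) unfolding indep3_def by blast
    then show "(if x \<in> A then 1 else 0::nat) + (if s x \<in> A then 1 else 0) + (if s (s x) \<in> A then 1 else 0) \<le> 2"
      by auto
  qed
  have "3 * card A = (\<Sum>x\<in>C. (if x \<in> A then 1 else 0::nat) + (if s x \<in> A then 1 else 0) + (if s (s x) \<in> A then 1 else 0))"
    using cnt r1 r2 by (simp add: sum.distrib)
  also have "\<dots> \<le> (\<Sum>x\<in>C. 2)" by (rule sum_mono) (rule le2)
  also have "\<dots> = 2 * 3 ^ n" using card_cube[of n] unfolding C_def by simp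
  finally have "3 * card A \<le> 2 * 3 ^ n" .
  then have "real (3 * card A) \<le> real (2 * 3 ^ n)" by linarith
  then show ?thesis by simp
qed

end
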